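(* Let $m\geq 1$, $a\ge 1$ and $n,p>1$ be integers, and let $G$ be an $r$-regular graph of order $m$. If $n\equiv 0\pmod 2$ or $apm\equiv 1\pmod 2$, then $G\circ aH_{n,p}$ is distance magic.
   Context: A graph $G$ on $v$ vertices is distance magic if there is a bijection $f:V(G)\to\{1,\ldots,v\}$ and a constant $k$ such that for every vertex $x$, $\sum_{y\in N(x)}f(y)=k$, where $N(x)$ is the set of neighbours of $x$. $H_{n,p}$ denotes the complete multipartite graph with $p$ partite sets each of size $n$; $aH$ denotes the disjoint union of $a$ copies of $H$. The lexicographic product $G\circ H$ has vertex set $V(G)\times V(H)$, with $(g,h)$ adjacent to $(g',h')$ iff either $gg'\in E(G)$, or $g=g'$ and $hh'\in E(H)$. *)

theory Defs
  imports Main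
begin

definition simple_graph :: "'a set \<Rightarrow> ('a \<Rightarrow> 'a \<Rightarrow> bool) \<Rightarrow> bool" where
  "simple_graph V E \<longleftrightarrow> finite V \<and> (\<forall>x y. E x y \<longrightarrow> x \<in> V \<and> y \<in> V)
     \<and> (\<forall>x y. E x y \<longrightarrow> E y x) \<and> (\<forall>x. \<not> E x x)"

definition nbhd :: "'a set \<Rightarrow> ('a \<Rightarrow> 'a \<Rightarrow> bool) \<Rightarrow> 'a \<Rightarrow> 'a set" where
  "nbhd V E x = {y \<in> V. E x y}"

definition regular :: "'a set \<Rightarrow> ('a \<Rightarrow> 'a \<Rightarrow> bool) \<Rightarrow> nat \<Rightarrow> bool" where
  "regular V E r \<longleftrightarrow> (\<forall>x\<in>V. card (nbhd V E x) = r)"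

definition distance_magic :: "'a set \<Rightarrow> ('a \<Rightarrow> 'a \<Rightarrow> bool) \<Rightarrow> bool" where
  "distance_magic V E \<longleftrightarrow> (\<exists>f k. bij_betw f V {1..card V} \<and>
      (\<forall>x\<in>V. (\<Sum>y\<in>nbhd V E x. f y) = (k::nat)))"

definition lex_verts :: "'a set \<Rightarrow> 'b set \<Rightarrow> ('a \<times> 'b) set" where
  "lex_verts VG VH = VG \<times> VH"

definition lex_adj :: "('a \<Rightarrow> 'a \<Rightarrow> bool) \<Rightarrow> ('b \<Rightarrow> 'b \<Rightarrow> bool) \<Rightarrow> ('a \<times> 'b) \<Rightarrow> ('a \<times> 'b) \<Rightarrow> bool" where
  "lex_adj EG EH u v \<longleftrightarrow> EG (fst u) (fst v) \<or> (fst u = fst v \<and> EH (snd u) (snd v))"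

text \<open>a H_{n,p}: vertices (c, i, j) with copy c < a, part i < p, index j < n;
  two vertices are adjacent iff they are in the same copy and in different parts.\<close>
definition aHnp_verts :: "nat \<Rightarrow> nat \<Rightarrow> nat \<Rightarrow> (nat \<times> nat \<times> nat) set" where
  "aHnp_verts a n p = {0..<a} \<times> {0..<p} \<times> {0..<n}"

definition aHnp_adj :: "nat \<Rightarrow> nat \<Rightarrow> nat \<Rightarrow> (nat \<times> nat \<times> nat) \<Rightarrow> (nat \<times> nat \<times> nat) \<Rightarrow> bool" where
  "aHnp_adj a n p u v \<longleftrightarrow> u \<in> aHnp_verts a n p \<and> v \<in> aHnp_verts a n p
     \<and> fst u = fst v \<and> fst (snd u) \<noteq> fst (snd v)"

end

theory Submission
  imports Defs
begin


lemma bij_by_inj: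
  assumes "inj_on f A" "f ` A \<subseteq> B" "card A = card B" "finite B"
  shows "bij_betw f A B"
  unfolding bij_betw_def using assms
  by (metis card_image card_subset_eq)

lemma magic_step:
  assumes F: "bij_betw F ({0..<M}\<times>{0..<n}) {1..M*n}" and S: "\<forall>k<M. (\<Sum>j<n. F(k,j)) = (S::nat)"
  shows "\<exists>F' S'. bij_betw F' ({0..<M}\<times>{0..<n+2}) {1..M*(n+2)} \<and> (\<forall>k<M. (\<Sum>j<n+2. F'(k,j)) = S')"
proof -
  define G where "G = (\<lambda>(k,j). if j < n then F (k,j) else if j = n then M*n+k+1 else M*n+2*M-k)"
  have Fr: "k < M \<Longrightarrow> j < n \<Longrightarrow> F (k,j) \<in> {1..M*n}" for k j
    using bij_betw_apply[OF F] by auto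
  have Fi: "k < M \<Longrightarrow> j < n \<Longrightarrow> k' < M \<Longrightarrow> j' < n \<Longrightarrow> F (k,j) = F(k',j') \<Longrightarrow> k = k' \<and> j = j'" for k j k' j'
  proof -
    assume h: "k < M" "j < n" "k' < M" "j' < n" "F (k,j) = F(k',j')"
    have "inj_on F ({0..<M}\<times>{0..<n})" using F by (rule bij_betw_imp_inj_on)
    then have "(k,j) = (k',j')" using h by (auto dest: inj_onD)
    then show ?thesis by simp
  qed
  have "inj_on G ({0..<M}\<times>{0..<n+2})"
  proof (rule inj_onI)
    fix x y assume a0: "x \<in> {0..<M}\<times>{0..<n+2}" "y \<in> {0..<M}\<times>{0..<n+2}" "G x = G y"
    obtain k j k' j' where xy: "x = (k,j)" "y = (k',j')" by fastforce
    have r: "k < M" "j < n+2" "k' < M" "j' < n+2" using a0 xy by auto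
    have eq: "G (k,j) = G (k',j')" using a0 xy by simp
    have v1: "G (k,j) = (if j < n then F (k,j) else if j = n then M*n+k+1 else M*n+2*M-k)"
      "G (k',j') = (if j' < n then F (k',j') else if j' = n then M*n+k'+1 else M*n+2*M-k')"
      unfolding G_def by simp_all
    have c: "j < n \<or> j = n \<or> j = n+1" "j' < n \<or> j' = n \<or> j' = n+1" using r by auto
    have "k = k' \<and> j = j'"
      using c
    proof (elim disjE)
      assume "j < n" "j' < n" then show ?thesis using Fi[of k j k' j'] r eq v1 by simp
    next
      assume "j < n" "j' = n" then show ?thesis using Fr[of k j] r eq v1 by auto
    next
      assume "j < n" "j' = n+1" then show ?thesis using Fr[of k j] r eq v1 by auto
    next
      assume "j = n" "j' < n" then show ?thesis using Fr[of k' j'] r eq v1 by auto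
    next
      assume "j = n" "j' = n" then show ?thesis using r eq v1 by auto
    next
      assume "j = n" "j' = n+1" then show ?thesis using r eq v1 by auto
    next
      assume "j = n+1" "j' < n" then show ?thesis using Fr[of k' j'] r eq v1 by auto
    next
      assume "j = n+1" "j' = n" then show ?thesis using r eq v1 by auto
    next
      assume "j = n+1" "j' = n+1" then show ?thesis using r eq v1 by auto
    qed
    then show "x = y" using xy by simp
  qed
  moreover have "G ` ({0..<M}\<times>{0..<n+2}) \<subseteq> {1..M*(n+2)}"
  proof
    fix y assume "y \<in> G ` ({0..<M}\<times>{0..<n+2})"
    then obtain k j where r: "k < M" "j < n+2" and y: "y = G (k,j)" by auto
    have v1: "G (k,j) = (if j < n then F (k,j) else if j = n then M*n+k+1 else M*n+2*M-k)"
      unfolding G_def by simp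
    have e: "M*(n+2) = M*n+2*M" by (simp add: algebra_simps)
    have c: "j < n \<or> j = n \<or> j = n+1" using r by auto
    then show "y \<in> {1..M*(n+2)}" unfolding e
    proof (elim disjE)
      assume jn: "j < n"
      then have "1 \<le> F(k,j)" "F(k,j) \<le> M*n" using Fr[of k j] r by auto
      moreover have "y = F(k,j)" using jn y v1 by simp
      moreover have "F(k,j) \<le> M*n+2*M" using calculation by linarith
      ultimately show "y \<in> {1..M*n+2*M}" by simp
    next
      assume "j = n" then show "y \<in> {1..M*n+2*M}" using r y v1 by auto
    next
      assume "j = n+1" then show "y \<in> {1..M*n+2*M}" using r y v1 by auto
    qed
  qed
  moreover have "card ({0..<M}\<times>{0..<n+2}) = card {1..M*(n+2)}"
    by (simp add: card_cartesian_product)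
  ultimately have "bij_betw G ({0..<M}\<times>{0..<n+2}) {1..M*(n+2)}"
    by (intro bij_by_inj) auto
  moreover have "\<forall>k<M. (\<Sum>j<n+2. G(k,j)) = S + (2*M*n + 2*M + 1)"
  proof (intro allI impI)
    fix k assume k: "k < M"
    have "(\<Sum>j<n+2. G(k,j)) = (\<Sum>j<n. G(k,j)) + G(k,n) + G(k,n+1)" by simp
    also have "(\<Sum>j<n. G(k,j)) = (\<Sum>j<n. F(k,j))" unfolding G_def by (intro sum.cong) auto
    also have "(\<Sum>j<n. F(k,j)) = S" using S k by blast
    also have "G(k,n) = M*n+k+1" unfolding G_def by simp
    also have "G(k,n+1) = M*n+2*M-k" unfolding G_def by simp
    finally show "(\<Sum>j<n+2. G(k,j)) = S + (2*M*n + 2*M + 1)" using k by simp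
  qed
  ultimately show ?thesis by blast
qed

lemma par_aux: "(k::nat) < Suc (2 * h) \<Longrightarrow> k' \<le> h \<Longrightarrow> \<not> k \<le> h \<Longrightarrow> 8 * h + 4 - 2 * k = 6 * h + 3 - 2 * k' \<Longrightarrow> False"
  by presburger

lemma magic_base3:
  assumes "odd M"
  shows "\<exists>F S. bij_betw F ({0..<M}\<times>{0..<3::nat}) {1..M*3} \<and> (\<forall>k<M. (\<Sum>j<(3::nat). F(k,j)) = (S::nat))"
proof -
  obtain h where h: "M = 2*h+1" using assms oddE by blast
  define G where "G = (\<lambda>(k,j). if j = (0::nat) then k+1 else if j = 1 then (if k \<le> h then 3*h+k+2 else h+k+1)
      else (if k \<le> h then 6*h+3-2*k else 8*h+4-2*k))"
  have "inj_on G ({0..<M}\<times>{0..<3::nat})"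
  proof (rule inj_onI)
    fix x y assume a0: "x \<in> {0..<M}\<times>{0..<3::nat}" "y \<in> {0..<M}\<times>{0..<3::nat}" "G x = G y"
    obtain k j k' j' where xy: "x = (k,j)" "y = (k',j')" by fastforce
    have a: "(k,j) \<in> {0..<M}\<times>{0..<3::nat}" "(k',j') \<in> {0..<M}\<times>{0..<3::nat}" "G (k,j) = G (k',j')"
      using a0 xy by auto
    have j: "j = 0 \<or> j = 1 \<or> j = 2" "j' = 0 \<or> j' = 1 \<or> j' = 2" "k < 2*h+1" "k' < 2*h+1" using a(1,2) h by auto
    have "k = k' \<and> j = j'"
    proof -
      have eq: "(if j = (0::nat) then k+1 else if j = 1 then (if k \<le> h then 3*h+k+2 else h+k+(1::nat))
      else (if k \<le> h then 6*h+3-2*k else 8*h+4-2*k)) = (if j' = (0::nat) then k'+1 else if j' = 1 then (if k' \<le> h then 3*h+k'+2 else h+k'+(1::nat))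
      else (if k' \<le> h then 6*h+3-2*k' else 8*h+4-2*k'))" using a(3) by (simp add: G_def)
      show ?thesis using j eq apply (elim disjE)
      apply (auto split: if_splits dest: par_aux)
      done
    qed
    then show "x = y" using xy by simp
  qed
  moreover have "G ` ({0..<M}\<times>{0..<3::nat}) \<subseteq> {1..M*3}"
    unfolding G_def h by (auto split: if_splits)
  moreover have "card ({0..<M}\<times>{0..<3::nat}) = card {1..M*3}"
    by (simp add: card_cartesian_product)
  ultimately have "bij_betw G ({0..<M}\<times>{0..<3::nat}) {1..M*3}"
    by (intro bij_by_inj) auto
  moreover have "\<forall>k<M. (\<Sum>j<3. G(k,j)) = 9*h+6"
    unfolding G_def h by (auto simp: numeral_3_eq_3)
  ultimately show ?thesis by blast
qed

lemma magic_even: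
  "\<exists>F S. bij_betw F ({0..<M}\<times>{0..<2*t}) {1..M*(2*t)} \<and> (\<forall>k<M. (\<Sum>j<2*t. F(k,j)) = (S::nat))"
proof (induction t)
  case 0
  show ?case by (auto simp: bij_betw_def)
next
  case (Suc t)
  then obtain F S where "bij_betw F ({0..<M}\<times>{0..<2*t}) {1..M*(2*t)}" "\<forall>k<M. (\<Sum>j<2*t. F(k,j)) = (S::nat)" by blast
  from magic_step[OF this] show ?case by (simp add: add.commute)
qed

lemma magic_odd:
  assumes "odd M"
  shows "\<exists>F S. bij_betw F ({0..<M}\<times>{0..<2*t+3}) {1..M*(2*t+3)} \<and> (\<forall>k<M. (\<Sum>j<2*t+3. F(k,j)) = (S::nat))"
proof (induction t)
  case 0
  show ?case using magic_base3[OF assms] by simp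
next
  case (Suc t)
  then obtain F S where "bij_betw F ({0..<M}\<times>{0..<2*t+3}) {1..M*(2*t+3)}" "\<forall>k<M. (\<Sum>j<2*t+3. F(k,j)) = (S::nat)" by blast
  from magic_step[OF this] show ?case by (simp add: add.commute)
qed



lemma magic_set:
  assumes "finite P" "even n \<or> (odd (card P) \<and> n > 1)"
  shows "\<exists>F S. bij_betw F (P\<times>{0..<n}) {1..card P*n} \<and> (\<forall>q\<in>P. (\<Sum>j<n. F(q,j)) = (S::nat))"
proof -
  have "\<exists>F S. bij_betw F ({0..<card P}\<times>{0..<n}) {1..card P*n} \<and> (\<forall>k<card P. (\<Sum>j<n. F(k,j)) = (S::nat))"
  proof (cases "even n")
    case True
    then obtain t where "n = 2*t" by blast
    then show ?thesis using magic_even by simp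
  next
    case False
    then have "odd (card P)" "n > 1" using assms by auto
    obtain u where u: "n = 2*u+1" using False oddE by blast
    with \<open>n > 1\<close> have "u \<ge> 1" by simp
    then have "n = 2*(u-1)+3" using u by simp
    then obtain t where "n = 2*t+3" by blast
    then show ?thesis using magic_odd[OF \<open>odd (card P)\<close>] by simp
  qed
  then obtain F S where F: "bij_betw F ({0..<card P}\<times>{0..<n}) {1..card P*n}" and S: "\<forall>k<card P. (\<Sum>j<n. F(k,j)) = (S::nat)"
    by blast
  obtain \<phi> where phi: "bij_betw \<phi> P {0..<card P}" using ex_bij_betw_finite_nat[OF assms(1)] by blast
  have "bij_betw (map_prod \<phi> id) (P\<times>{0..<n}) ({0..<card P}\<times>{0..<n})"
    by (intro bij_betw_map_prod phi bij_betw_id)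
  then have "bij_betw (F \<circ> map_prod \<phi> id) (P\<times>{0..<n}) {1..card P*n}"
    using F bij_betw_trans by blast
  moreover have "\<forall>q\<in>P. (\<Sum>j<n. (F \<circ> map_prod \<phi> id)(q,j)) = S"
  proof
    fix q assume "q \<in> P"
    then have "\<phi> q < card P" using bij_betw_apply[OF phi] by auto
    then show "(\<Sum>j<n. (F \<circ> map_prod \<phi> id)(q,j)) = S" using S by simp
  qed
  ultimately show ?thesis by blast
qed
theorem theorem12:
  fixes V :: "'a set" and E :: "'a \<Rightarrow> 'a \<Rightarrow> bool" and m r a n p :: nat
  assumes "simple_graph V E" and "card V = m" and "regular V E r"
    and "m \<ge> 1" and "a \<ge> 1" and "n > 1" and "p > 1"
    and "even n \<or> odd (a * p * m)"
  shows "distance_magic (lex_verts V (aHnp_verts a n p)) (lex_adj E (aHnp_adj a n p))"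
proof -
  have finV: "finite V" and Esym: "\<And>x y. E x y \<Longrightarrow> x \<in> V \<and> y \<in> V" and Eirr: "\<And>x. \<not> E x x"
    using assms(1) unfolding simple_graph_def by auto
  define P where "P = V \<times> {0..<a} \<times> {0..<p}"
  define A where "A = {0..<a} \<times> {0..<p} \<times> {0..<n}"
  define W where "W = V \<times> A"
  have finP: "finite P" unfolding P_def using finV by simp
  have cardP: "card P = m * (a * p)" unfolding P_def using assms(2) by (simp add: card_cartesian_product)
  have cardW: "card W = card P * n" unfolding W_def A_def cardP using assms(2) by (simp add: card_cartesian_product)
  have cond: "even n \<or> (odd (card P) \<and> n > 1)" using assms(6,8) cardP by (auto simp: mult.commute mult.left_commute)
  obtain F S where F: "bij_betw F (P\<times>{0..<n}) {1..card P*n}" and S: "\<forall>q\<in>P. (\<Sum>j<n. F(q,j)) = (S::nat)"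
    using magic_set[OF finP cond] by blast
  define \<rho> :: "'a \<times> nat \<times> nat \<times> nat \<Rightarrow> ('a \<times> nat \<times> nat) \<times> nat" where "\<rho> = (\<lambda>(g,c,i,j). ((g,c,i),j))"
  define \<sigma> :: "('a \<times> nat \<times> nat) \<times> nat \<Rightarrow> 'a \<times> nat \<times> nat \<times> nat" where "\<sigma> = (\<lambda>((g,c,i),j). (g,c,i,j))"
  have rho: "bij_betw \<rho> W (P\<times>{0..<n})"
    by (rule bij_betw_byWitness[where f'=\<sigma>]) (auto simp: \<rho>_def \<sigma>_def W_def A_def P_def)
  define f where "f = F \<circ> \<rho>"
  have fbij: "bij_betw f W {1..card W}"
    unfolding f_def cardW using bij_betw_trans[OF rho F] .
  have fval: "f (g,c,i,j) = F ((g,c,i),j)" for g c i j unfolding f_def \<rho>_def by simp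
  have block: "(\<Sum>z\<in>A. f(g',z)) = a*p*S" if g': "g' \<in> V" for g'
  proof -
    have "(\<Sum>z\<in>A. f(g',z)) = (\<Sum>c\<in>{0..<a}. \<Sum>i\<in>{0..<p}. \<Sum>j\<in>{0..<n}. f(g',c,i,j))"
      unfolding A_def by (simp add: sum.cartesian_product)
    also have "\<dots> = (\<Sum>c\<in>{0..<a}. \<Sum>i\<in>{0..<p}. S)"
    proof (intro sum.cong refl)
      fix c i assume "c \<in> {0..<a}" "i \<in> {0..<p}"
      then have "(g',c,i) \<in> P" unfolding P_def using g' by auto
      then show "(\<Sum>j\<in>{0..<n}. f(g',c,i,j)) = S" using S by (simp add: fval atLeast0LessThan)
    qed
    finally show ?thesis by simp
  qed
  have "\<forall>x\<in>W. (\<Sum>y\<in>nbhd W (lex_adj E (aHnp_adj a n p)) x. f y) = r*a*p*S + (p-1)*S"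
  proof
    fix x assume xW: "x \<in> W"
    obtain g c i j where x: "x = (g,c,i,j)" by (cases x) auto
    have g: "g \<in> V" and c: "c < a" and i: "i < p" and j: "j < n" using xW unfolding x W_def A_def by auto
    define N where "N = nbhd V E g"
    define B where "B = {c} \<times> (({0..<p}-{i}) \<times> {0..<n})"
    have NV: "N \<subseteq> V" unfolding N_def nbhd_def by auto
    have cardN: "card N = r" using assms(3) g unfolding N_def regular_def by auto
    have nb: "nbhd W (lex_adj E (aHnp_adj a n p)) x = (N \<times> A) \<union> ({g} \<times> B)"
      unfolding x N_def B_def W_def nbhd_def lex_adj_def aHnp_adj_def
      using g c i j Esym by (auto simp: A_def aHnp_verts_def)
    have disj: "(N \<times> A) \<inter> ({g} \<times> B) = {}" unfolding N_def nbhd_def using Eirr by auto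
    have finN: "finite N" using NV finV finite_subset by blast
    have finA: "finite A" "finite B" unfolding A_def B_def by auto
    have s1: "(\<Sum>y\<in>N \<times> A. f y) = r*a*p*S"
    proof -
      have "(\<Sum>y\<in>N \<times> A. f y) = (\<Sum>g'\<in>N. \<Sum>z\<in>A. f (g',z))" by (simp add: sum.cartesian_product)
      also have "\<dots> = (\<Sum>g'\<in>N. a*p*S)" using block NV by (intro sum.cong) auto
      finally show ?thesis using cardN by simp
    qed
    have s2: "(\<Sum>y\<in>{g} \<times> B. f y) = (p-1)*S"
    proof -
      have "(\<Sum>y\<in>{g} \<times> B. f y) = (\<Sum>g'\<in>{g}. \<Sum>z\<in>B. f (g',z))" by (simp add: sum.cartesian_product)
      also have "\<dots> = (\<Sum>z\<in>B. f (g,z))" by simp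
      also have "\<dots> = (\<Sum>c'\<in>{c}. \<Sum>w\<in>({0..<p}-{i}) \<times> {0..<n}. f (g,c',w))"
        unfolding B_def by (simp add: sum.cartesian_product)
      also have "\<dots> = (\<Sum>w\<in>({0..<p}-{i}) \<times> {0..<n}. f (g,c,w))" by simp
      also have "\<dots> = (\<Sum>i'\<in>{0..<p}-{i}. \<Sum>j'\<in>{0..<n}. f (g,c,i',j'))"
        by (simp add: sum.cartesian_product)
      also have "\<dots> = (\<Sum>i'\<in>{0..<p}-{i}. S)"
      proof (intro sum.cong refl)
        fix i' assume "i' \<in> {0..<p}-{i}"
        then have "(g,c,i') \<in> P" unfolding P_def using g c by auto
        then show "(\<Sum>j\<in>{0..<n}. f(g,c,i',j)) = S" using S by (simp add: fval atLeast0LessThan)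
      qed
      finally show ?thesis using i by simp
    qed
    show "(\<Sum>y\<in>nbhd W (lex_adj E (aHnp_adj a n p)) x. f y) = r*a*p*S + (p-1)*S"
      unfolding nb using s1 s2 disj finN finA by (simp add: sum.union_disjoint)
  qed
  then show ?thesis
    unfolding distance_magic_def using fbij unfolding W_def A_def lex_verts_def aHnp_verts_def by blast
qed

end
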